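(* Let $n \leq 3$ be a positive integer. Every $n \times n$ nonnegative centrosymmetric matrix has only real eigenvalues. Moreover, real numbers $\lambda_1 \geq \cdots \geq \lambda_n$ are the eigenvalues of some $n \times n$ nonnegative centrosymmetric matrix if and only if $\lambda_1 \geq |\lambda_n|$ and $\sum_{j=1}^n \lambda_j \geq 0$.
   Context: $J$ is the $n \times n$ reverse identity matrix (ones on the anti-diagonal, zeros elsewhere). A matrix $Q$ is centrosymmetric if $JQJ = Q$ and nonnegative if all entries are nonnegative. *)

theory Defs
  imports "Jordan_Normal_Form.Char_Poly"
begin

definition rev_id_mat :: "nat \<Rightarrow> real mat" where
  "rev_id_mat n = mat n n (\<lambda>(i, j). if i + j = n - 1 then 1 else 0)"

definition centrosymmetric :: "real mat \<Rightarrow> bool" where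
  "centrosymmetric Q \<longleftrightarrow> rev_id_mat (dim_row Q) * Q * rev_id_mat (dim_row Q) = Q"

definition nonneg_mat :: "real mat \<Rightarrow> bool" where
  "nonneg_mat Q \<longleftrightarrow> (\<forall>i < dim_row Q. \<forall>j < dim_col Q. Q $$ (i, j) \<ge> 0)"

end

theory Submission
  imports Defs
begin

lemma det2: assumes "(A :: 'a :: comm_ring_1 mat) \<in> carrier_mat 2 2"
  shows "det A = A$$(0,0) * A$$(1,1) - A$$(1,0) * A$$(0,1)"
proof -
  have "det A = (\<Sum>i<2. A $$ (i,0) * cofactor A i 0)" by (rule laplace_expansion_column[OF assms]) auto
  also have "\<dots> = A$$(0,0) * cofactor A 0 0 + A$$(1,0) * cofactor A 1 0"
    by (simp add: numeral_2_eq_2)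
  also have "cofactor A 0 0 = A$$(1,1)" unfolding cofactor_def
    using assms by (subst det_single) (auto simp: mat_delete_def numeral_2_eq_2)
  also have "cofactor A 1 0 = - A$$(0,1)" unfolding cofactor_def
    using assms by (subst det_single) (auto simp: mat_delete_def numeral_2_eq_2)
  finally show ?thesis by (simp add: algebra_simps)
qed
lemma det3: assumes "(A :: 'a :: comm_ring_1 mat) \<in> carrier_mat 3 3"
  shows "det A = A$$(0,0) * (A$$(1,1) * A$$(2,2) - A$$(2,1) * A$$(1,2))
      - A$$(1,0) * (A$$(0,1) * A$$(2,2) - A$$(2,1) * A$$(0,2))
      + A$$(2,0) * (A$$(0,1) * A$$(1,2) - A$$(1,1) * A$$(0,2))"
proof -
  have "det A = (\<Sum>i<3. A $$ (i,0) * cofactor A i 0)" by (rule laplace_expansion_column[OF assms]) auto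
  also have "\<dots> = A$$(0,0) * cofactor A 0 0 + A$$(1,0) * cofactor A 1 0 + A$$(2,0) * cofactor A 2 0"
  proof -
    have "{..<3::nat} = {0,1,2}" by auto
    then show ?thesis by (simp add: add.assoc)
  qed
  also have "cofactor A 0 0 = A$$(1,1) * A$$(2,2) - A$$(2,1) * A$$(1,2)" unfolding cofactor_def
    using assms by (subst det2) (auto simp: mat_delete_def numeral_2_eq_2)
  also have "cofactor A 1 0 = - (A$$(0,1) * A$$(2,2) - A$$(2,1) * A$$(0,2))" unfolding cofactor_def
    using assms by (subst det2) (auto simp: mat_delete_def numeral_2_eq_2)
  also have "cofactor A 2 0 = (A$$(0,1) * A$$(1,2) - A$$(1,1) * A$$(0,2))" unfolding cofactor_def
    using assms by (subst det2) (auto simp: mat_delete_def numeral_2_eq_2)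
  finally show ?thesis by (simp add: algebra_simps)
qed

lemma cp1: assumes "(A :: 'a :: field mat) \<in> carrier_mat 1 1"
  shows "poly (char_poly A) x = x - A$$(0,0)"
  unfolding char_poly_matrix[OF assms]
  using assms by (subst det_single) (auto simp: char_matrix_def)

lemma cp2: assumes "(A :: 'a :: field mat) \<in> carrier_mat 2 2"
  shows "poly (char_poly A) x = (x - A$$(0,0)) * (x - A$$(1,1)) - A$$(1,0) * A$$(0,1)"
  unfolding char_poly_matrix[OF assms]
  using assms by (subst det2) (auto simp: char_matrix_def algebra_simps)

lemma cp3: assumes "(A :: 'a :: field mat) \<in> carrier_mat 3 3"
  shows "poly (char_poly A) x = (x - A$$(0,0)) * ((x - A$$(1,1)) * (x - A$$(2,2)) - A$$(2,1) * A$$(1,2))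
      - A$$(1,0) * (A$$(0,1) * (x - A$$(2,2)) + A$$(2,1) * A$$(0,2))
      - A$$(2,0) * (A$$(0,1) * A$$(1,2) + (x - A$$(1,1)) * A$$(0,2))"
  unfolding char_poly_matrix[OF assms]
  using assms by (subst det3) (auto simp: char_matrix_def algebra_simps)

lemma JAJ: assumes "A \<in> carrier_mat n n" "i < n" "j < n"
  shows "(rev_id_mat n * A * rev_id_mat n) $$ (i,j) = A $$ (n-1-i, n-1-j)"
proof -
  have JA: "(rev_id_mat n * A) $$ (i',k) = A$$(n-1-i',k)" if "i' < n" "k < n" for i' k
  proof -
    have "(rev_id_mat n * A) $$ (i',k) = (\<Sum>l\<in>{0..<n}. (if i' + l = n-1 then 1 else 0) * A$$(l,k))"
      using assms that by (simp add: rev_id_mat_def scalar_prod_def)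
    also have "\<dots> = (\<Sum>l\<in>{0..<n}. (if l = n-1-i' then A$$(l,k) else 0))"
      using that by (intro sum.cong) auto
    also have "\<dots> = A$$(n-1-i',k)" using that by simp
    finally show ?thesis .
  qed
  have "(rev_id_mat n * A * rev_id_mat n) $$ (i,j) = (\<Sum>l\<in>{0..<n}. (rev_id_mat n * A) $$ (i,l) * (if l + j = n-1 then 1 else 0))"
    using assms by (simp add: rev_id_mat_def scalar_prod_def)
  also have "\<dots> = (\<Sum>l\<in>{0..<n}. (if l = n-1-j then A$$(n-1-i,l) else 0))"
    using assms JA by (intro sum.cong) auto
  also have "\<dots> = A$$(n-1-i,n-1-j)" using assms by simp
  finally show ?thesis .
qed

lemma centro_entry: assumes "A \<in> carrier_mat n n" "centrosymmetric A" "i < n" "j < n"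
  shows "A $$ (i,j) = A $$ (n-1-i, n-1-j)"
proof -
  have "A $$ (i,j) = (rev_id_mat n * A * rev_id_mat n) $$ (i,j)"
    using assms unfolding centrosymmetric_def by simp
  also have "\<dots> = A $$ (n-1-i, n-1-j)" using JAJ assms by blast
  finally show ?thesis .
qed

lemma map_entry: assumes "A \<in> carrier_mat n n" "i < n" "j < n"
  shows "map_mat complex_of_real A $$ (i,j) = complex_of_real (A $$ (i,j))"
  using assms by simp

lemma quad_real: assumes "(z::complex)^2 - of_real s * z + of_real q = 0" "s^2 - 4*q \<ge> 0"
  shows "z \<in> \<real>"
proof -
  define r where "r = sqrt (s^2 - 4*q)"
  have r2: "r^2 = s^2 - 4*q" using assms(2) unfolding r_def by simp
  have "(2*z - of_real s - of_real r) * (2*z - of_real s + of_real r) = 4 * (z^2 - of_real s * z) + of_real (s^2 - r^2)"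
    by (simp add: algebra_simps power2_eq_square)
  also have "of_real (s^2 - r^2) = (4 * of_real q :: complex)" using r2 by simp
  also have "4 * (z^2 - of_real s * z) + 4 * of_real q = 4 * (z^2 - of_real s * z + of_real q)"
    by (simp add: algebra_simps)
  also have "\<dots> = 0" using assms(1) by simp
  finally have "2*z - of_real s - of_real r = 0 \<or> 2*z - of_real s + of_real r = 0" by simp
  then have "z = of_real ((s + r)/2) \<or> z = of_real ((s - r)/2)"
  proof
    assume "2*z - of_real s - of_real r = 0"
    then have "z = (of_real s + of_real r)/2" by (simp add: field_simps)
    then show ?thesis by simp
  next
    assume "2*z - of_real s + of_real r = 0"
    then have "z = (of_real s - of_real r)/2" by (simp add: field_simps)
    then show ?thesis by simp
  qed
  then show ?thesis by (metis Reals_of_real)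
qed

lemma cp3_centro: assumes A: "A \<in> carrier_mat 3 3" and C: "centrosymmetric A"
  shows "poly (char_poly A) x = (x - (A$$(0,0) - A$$(0,2))) *
     (x^2 - (A$$(0,0) + A$$(0,2) + A$$(1,1)) * x + ((A$$(0,0) + A$$(0,2)) * A$$(1,1) - 2 * A$$(0,1) * A$$(1,0)))"
    (is ?R)
  and "poly (char_poly (map_mat complex_of_real A)) z = (z - of_real (A$$(0,0) - A$$(0,2))) *
     (z^2 - of_real (A$$(0,0) + A$$(0,2) + A$$(1,1)) * z + of_real ((A$$(0,0) + A$$(0,2)) * A$$(1,1) - 2 * A$$(0,1) * A$$(1,0)))"
    (is ?C)
proof -
  have e1: "A$$(2,2) = A$$(0,0)" "A$$(2,1) = A$$(0,1)" "A$$(2,0) = A$$(0,2)" "A$$(1,2) = A$$(1,0)"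
    using centro_entry[OF A C, of 2 2] centro_entry[OF A C, of 2 1] centro_entry[OF A C, of 2 0]
      centro_entry[OF A C, of 1 2] by auto
  show ?R unfolding cp3[OF A] e1 by (simp add: algebra_simps power2_eq_square)
  have B: "map_mat complex_of_real A \<in> carrier_mat 3 3" using A by simp
  show ?C unfolding cp3[OF B] using A e1 by (simp add: algebra_simps power2_eq_square)
qed

lemma cp2_centro: assumes A: "A \<in> carrier_mat 2 2" and C: "centrosymmetric A"
  shows "poly (char_poly A) x = (x - (A$$(0,0) + A$$(0,1))) * (x - (A$$(0,0) - A$$(0,1)))"
    (is ?R)
  and "poly (char_poly (map_mat complex_of_real A)) z = (z - of_real (A$$(0,0) + A$$(0,1))) * (z - of_real (A$$(0,0) - A$$(0,1)))"
    (is ?C)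
proof -
  have e1: "A$$(1,1) = A$$(0,0)" "A$$(1,0) = A$$(0,1)"
    using centro_entry[OF A C, of 1 1] centro_entry[OF A C, of 1 0] by auto
  show ?R unfolding cp2[OF A] e1 by (simp add: algebra_simps power2_eq_square)
  have B: "map_mat complex_of_real A \<in> carrier_mat 2 2" using A by simp
  show ?C unfolding cp2[OF B] using A e1 by (simp add: algebra_simps power2_eq_square)
qed

lemma real_part:
  assumes n: "1 \<le> n" "n \<le> 3" and A: "A \<in> carrier_mat n n" and N: "nonneg_mat A" and C: "centrosymmetric A"
    and ev: "eigenvalue (map_mat complex_of_real A) z"
  shows "z \<in> \<real>"
proof -
  have B: "map_mat complex_of_real A \<in> carrier_mat n n" using A by simp
  have root: "poly (char_poly (map_mat complex_of_real A)) z = 0"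
    using eigenvalue_root_char_poly[OF B] ev by simp
  have "n = 1 \<or> n = 2 \<or> n = 3" using n by auto
  moreover {
    assume "n = 1"
    with A B root have "z = of_real (A$$(0,0))" using cp1[OF B[unfolded \<open>n=1\<close>]] by simp
    then have ?thesis by simp }
  moreover {
    assume n2: "n = 2"
    with A root have "(z - of_real (A$$(0,0) + A$$(0,1))) * (z - of_real (A$$(0,0) - A$$(0,1))) = 0"
      using cp2_centro(2)[of A z] C by simp
    then have ?thesis by (auto simp del: of_real_add of_real_diff) }
  moreover {
    assume n3: "n = 3"
    let ?a = "A$$(0,0)" and ?b = "A$$(0,1)" and ?c = "A$$(0,2)" and ?d = "A$$(1,0)" and ?e = "A$$(1,1)"
    from A root n3 C have "(z - of_real (?a - ?c)) *
     (z^2 - of_real (?a + ?c + ?e) * z + of_real ((?a + ?c) * ?e - 2 * ?b * ?d)) = 0"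
      using cp3_centro(2)[of A z] by simp
    then have "z = of_real (?a - ?c) \<or> z^2 - of_real (?a + ?c + ?e) * z + of_real ((?a + ?c) * ?e - 2 * ?b * ?d) = 0"
      by simp
    moreover have "?b \<ge> 0" "?d \<ge> 0" using N A n3 unfolding nonneg_mat_def by auto
    then have "(?a + ?c + ?e)^2 - 4 * ((?a + ?c) * ?e - 2 * ?b * ?d) \<ge> 0"
    proof -
      have "(?a + ?c + ?e)^2 - 4 * ((?a + ?c) * ?e - 2 * ?b * ?d) = (?a + ?c - ?e)^2 + 8 * (?b * ?d)"
        by (simp add: algebra_simps power2_eq_square)
      also have "\<dots> \<ge> 0" using \<open>?b \<ge> 0\<close> \<open>?d \<ge> 0\<close> by simp
      finally show ?thesis .
    qed
    ultimately have ?thesis using quad_real by (metis Reals_of_real) }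
  ultimately show ?thesis by blast
qed

definition M3 :: "real \<Rightarrow> real \<Rightarrow> real \<Rightarrow> real \<Rightarrow> real \<Rightarrow> real mat" where
  "M3 a b c d e = mat 3 3 (\<lambda>(i,j). if i = 1 then (if j = 1 then e else d) else if j = 1 then b else if i = j then a else c)"

lemma M3_carrier: "M3 a b c d e \<in> carrier_mat 3 3" unfolding M3_def by simp

lemma M3_centro: "centrosymmetric (M3 a b c d e)"
  unfolding centrosymmetric_def
proof (rule eq_matI)
  show "dim_row (rev_id_mat (dim_row (M3 a b c d e)) * M3 a b c d e * rev_id_mat (dim_row (M3 a b c d e))) = dim_row (M3 a b c d e)"
    by (simp add: M3_def rev_id_mat_def)
  show "dim_col (rev_id_mat (dim_row (M3 a b c d e)) * M3 a b c d e * rev_id_mat (dim_row (M3 a b c d e))) = dim_col (M3 a b c d e)"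
    by (simp add: M3_def rev_id_mat_def)
  fix i j assume "i < dim_row (M3 a b c d e)" "j < dim_col (M3 a b c d e)"
  then have ij: "i < 3" "j < 3" by (auto simp: M3_def)
  have dr: "dim_row (M3 a b c d e) = 3" by (simp add: M3_def)
  show "(rev_id_mat (dim_row (M3 a b c d e)) * M3 a b c d e * rev_id_mat (dim_row (M3 a b c d e))) $$ (i, j) = M3 a b c d e $$ (i, j)"
    unfolding dr JAJ[OF M3_carrier ij] using ij by (auto simp: M3_def)
qed

lemma M3_nonneg: "a \<ge> 0 \<Longrightarrow> b \<ge> 0 \<Longrightarrow> c \<ge> 0 \<Longrightarrow> d \<ge> 0 \<Longrightarrow> e \<ge> 0 \<Longrightarrow> nonneg_mat (M3 a b c d e)"
  unfolding nonneg_mat_def M3_def by auto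

lemma M3_poly: "poly (char_poly (M3 a b c d e)) x = (x - (a - c)) * (x^2 - (a + c + e) * x + ((a + c) * e - 2 * b * d))"
  using cp3_centro(1)[OF M3_carrier M3_centro, of a b c d e x] by (simp add: M3_def)

lemma poly_prod3: fixes lam :: "nat \<Rightarrow> real" shows "poly (\<Prod>i = 1..3. [:- lam i, 1:]) x = (x - lam 1) * (x - lam 2) * (x - lam (3::nat))"
proof -
  have "{1..3::nat} = {1,2,3}" by auto
  then show ?thesis by (simp add: poly_prod) (simp add: algebra_simps)
qed

lemma suff3: assumes o: "lam 1 \<ge> lam 2" "lam 2 \<ge> lam (3::nat)" and h: "lam 1 \<ge> \<bar>lam 3\<bar>" "lam 1 + lam 2 + lam 3 \<ge> 0"
  shows "\<exists>A\<in>carrier_mat 3 3. nonneg_mat A \<and> centrosymmetric A \<and> char_poly A = (\<Prod>i = 1..3. [:- lam i, 1:])"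
proof (cases "lam 2 \<ge> 0")
  case True
  define A where "A = M3 ((lam 1 + lam 3)/2) 0 ((lam 1 - lam 3)/2) 0 (lam 2)"
  have "nonneg_mat A" unfolding A_def using o h True by (intro M3_nonneg) auto
  moreover have "char_poly A = (\<Prod>i = 1..3. [:- lam i, 1:])"
    unfolding poly_eq_poly_eq_iff[symmetric]
  proof
    fix x show "poly (char_poly A) x = poly (\<Prod>i = 1..3. [:- lam i, 1:]) x"
      unfolding A_def M3_poly poly_prod3 by (simp add: field_simps power2_eq_square)
  qed
  ultimately show ?thesis unfolding A_def using M3_carrier M3_centro by blast
next
  case False
  define A where "A = M3 ((lam 1 + lam 2 + lam 3)/2) 1 ((lam 1 + lam 2 - lam 3)/2) (- lam 1 * lam 2 / 2) 0"
  have "nonneg_mat A" unfolding A_def using o h False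
    by (intro M3_nonneg) (auto simp: mult_nonneg_nonpos)
  moreover have "char_poly A = (\<Prod>i = 1..3. [:- lam i, 1:])"
    unfolding poly_eq_poly_eq_iff[symmetric]
  proof
    fix x show "poly (char_poly A) x = poly (\<Prod>i = 1..3. [:- lam i, 1:]) x"
      unfolding A_def M3_poly poly_prod3 by (simp add: field_simps power2_eq_square)
  qed
  ultimately show ?thesis unfolding A_def using M3_carrier M3_centro by blast
qed

lemma nec3: fixes lam :: "nat \<Rightarrow> real"
  assumes o: "lam 1 \<ge> lam 2" "lam 2 \<ge> lam 3"
    and A: "A \<in> carrier_mat 3 3" and N: "nonneg_mat A" and C: "centrosymmetric A"
    and P: "char_poly A = (\<Prod>i = 1..3. [:- lam i, 1:])"
  shows "lam 1 \<ge> \<bar>lam 3\<bar> \<and> lam 1 + lam 2 + lam 3 \<ge> 0"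
proof -
  define a where "a = A$$(0,0)"
  define b where "b = A$$(0,1)"
  define c where "c = A$$(0,2)"
  define d where "d = A$$(1,0)"
  define e where "e = A$$(1,1)"
  have nn: "a \<ge> 0" "b \<ge> 0" "c \<ge> 0" "d \<ge> 0" "e \<ge> 0"
    using N A unfolding nonneg_mat_def a_def b_def c_def d_def e_def by auto
  define r where "r = a - c"
  define s where "s = a + c + e"
  define q where "q = (a + c) * e - 2 * b * d"
  have F: "(x - lam 1) * (x - lam 2) * (x - lam 3) = (x - r) * (x^2 - s * x + q)" for x
    using cp3_centro(1)[OF A C, of x] poly_prod3[of lam x] P
    unfolding r_def s_def q_def a_def b_def c_def d_def e_def by simp
  have tr: "lam 1 + lam 2 + lam 3 = r + s"
  proof -
    have "(1 - lam 1) * (1 - lam 2) * (1 - lam 3) + (-1 - lam 1) * (-1 - lam 2) * (-1 - lam 3) - 2 * ((0 - lam 1) * (0 - lam 2) * (0 - lam 3))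
      = (1 - r) * (1^2 - s * 1 + q) + (-1 - r) * ((-1)^2 - s * (-1) + q) - 2 * ((0 - r) * (0^2 - s * 0 + q))"
      using F[of 1] F[of "-1"] F[of 0] by simp
    then show ?thesis by (simp add: algebra_simps)
  qed
  define D where "D = s^2 - 4 * q"
  have D: "D = (a + c - e)^2 + 8 * (b * d)" unfolding D_def s_def q_def by (simp add: algebra_simps power2_eq_square)
  have Dge: "sqrt D \<ge> \<bar>a + c - e\<bar>"
  proof -
    have "(a + c - e)^2 \<le> D" using D nn by simp
    then have "sqrt ((a + c - e)^2) \<le> sqrt D" by (rule real_sqrt_le_mono)
    then show ?thesis by simp
  qed
  have D0: "D \<ge> 0" using D nn by simp
  define m1 where "m1 = (s + sqrt D)/2"
  define m2 where "m2 = (s - sqrt D)/2"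
  have sqD: "sqrt D * sqrt D = D" using D0 by simp
  have Q: "x^2 - s * x + q = (x - m1) * (x - m2)" for x
  proof -
    have "(x - m1) * (x - m2) = x^2 - s * x + (s^2 - sqrt D * sqrt D)/4"
      unfolding m1_def m2_def by (simp add: field_simps power2_eq_square)
    also have "\<dots> = x^2 - s * x + q" using D0 unfolding D_def by simp
    finally show ?thesis by simp
  qed
  have "a + c - e \<le> sqrt D" using Dge by linarith
  then have m1r: "m1 \<ge> \<bar>r\<bar>" using nn unfolding m1_def s_def r_def abs_le_iff by auto
  have "sqrt D \<ge> 0" using D0 by simp
  moreover have "s \<ge> 0" using nn unfolding s_def by simp
  ultimately have m1m2: "m1 \<ge> \<bar>m2\<bar>" unfolding m1_def m2_def abs_le_iff by (auto simp: field_simps)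
  have "(m1 - lam 1) * (m1 - lam 2) * (m1 - lam 3) = 0" using F[of m1] Q[of m1] by simp
  then have "m1 = lam 1 \<or> m1 = lam 2 \<or> m1 = lam 3" by auto
  then have l1: "lam 1 \<ge> m1" using o by auto
  have "(lam 3 - r) * ((lam 3 - m1) * (lam 3 - m2)) = 0" using F[of "lam 3"] Q[of "lam 3"] by simp
  then have "lam 3 = r \<or> lam 3 = m1 \<or> lam 3 = m2" by auto
  then have "\<bar>lam 3\<bar> \<le> m1" using m1r m1m2 nn unfolding m1_def by auto
  moreover have "r + s \<ge> 0" unfolding r_def s_def using nn by simp
  ultimately show ?thesis using l1 tr by simp
qed

lemma part3: fixes lam :: "nat \<Rightarrow> real"
  assumes "\<forall>i \<in> {1..<3}. lam i \<ge> lam (Suc i)"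
  shows "(\<exists>A \<in> carrier_mat 3 3. nonneg_mat A \<and> centrosymmetric A \<and>
                 char_poly A = (\<Prod>i = 1..3. [:- lam i, 1:]))
             \<longleftrightarrow> (lam 1 \<ge> \<bar>lam 3\<bar> \<and> (\<Sum>j = 1..3. lam j) \<ge> 0)"
proof -
  have o: "lam 1 \<ge> lam 2" "lam 2 \<ge> lam 3" using assms[rule_format, of 1] assms[rule_format, of 2] by (auto simp: numeral_eq_Suc)
  have "{1..3::nat} = {1,2,3}" by auto
  then have S: "(\<Sum>j = 1..3. lam j) = lam 1 + lam 2 + lam 3" by simp
  show ?thesis unfolding S using nec3[OF o] suff3[OF o] by blast
qed

definition M2 :: "real \<Rightarrow> real \<Rightarrow> real mat" where
  "M2 a b = mat 2 2 (\<lambda>(i,j). if i = j then a else b)"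

lemma M2_carrier: "M2 a b \<in> carrier_mat 2 2" unfolding M2_def by simp

lemma M2_centro: "centrosymmetric (M2 a b)"
  unfolding centrosymmetric_def
proof (rule eq_matI)
  show "dim_row (rev_id_mat (dim_row (M2 a b)) * M2 a b * rev_id_mat (dim_row (M2 a b))) = dim_row (M2 a b)"
    by (simp add: M2_def rev_id_mat_def)
  show "dim_col (rev_id_mat (dim_row (M2 a b)) * M2 a b * rev_id_mat (dim_row (M2 a b))) = dim_col (M2 a b)"
    by (simp add: M2_def rev_id_mat_def)
  fix i j assume "i < dim_row (M2 a b)" "j < dim_col (M2 a b)"
  then have ij: "i < 2" "j < 2" by (auto simp: M2_def)
  have dr: "dim_row (M2 a b) = 2" by (simp add: M2_def)
  show "(rev_id_mat (dim_row (M2 a b)) * M2 a b * rev_id_mat (dim_row (M2 a b))) $$ (i, j) = M2 a b $$ (i, j)"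
    unfolding dr JAJ[OF M2_carrier ij] using ij by (auto simp: M2_def)
qed

lemma part2: fixes lam :: "nat \<Rightarrow> real"
  assumes "\<forall>i \<in> {1..<2}. lam i \<ge> lam (Suc i)"
  shows "(\<exists>A \<in> carrier_mat 2 2. nonneg_mat A \<and> centrosymmetric A \<and>
                 char_poly A = (\<Prod>i = 1..2. [:- lam i, 1:]))
             \<longleftrightarrow> (lam 1 \<ge> \<bar>lam 2\<bar> \<and> (\<Sum>j = 1..2. lam j) \<ge> 0)"
proof -
  have o: "lam 1 \<ge> lam 2" using assms by (auto simp: numeral_eq_Suc)
  have "{1..2::nat} = {1,2}" by auto
  then have S: "(\<Sum>j = 1..2. lam j) = lam 1 + lam 2" and
    PP: "poly (\<Prod>i = 1..2. [:- lam i, 1:]) x = (x - lam 1) * (x - lam 2)" for x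
    by (simp_all add: poly_prod) (simp add: algebra_simps)
  show ?thesis unfolding S
  proof
    assume "\<exists>A \<in> carrier_mat 2 2. nonneg_mat A \<and> centrosymmetric A \<and> char_poly A = (\<Prod>i = 1..2. [:- lam i, 1:])"
    then obtain A where A: "A \<in> carrier_mat 2 2" and N: "nonneg_mat A" and C: "centrosymmetric A"
      and P: "char_poly A = (\<Prod>i = 1..2. [:- lam i, 1:])" by blast
    define a where "a = A$$(0,0)"
    define b where "b = A$$(0,1)"
    have a0: "a \<ge> 0" using N A unfolding nonneg_mat_def a_def by auto
    have F: "(x - lam 1) * (x - lam 2) = (x - (a + b)) * (x - (a - b))" for x
      using cp2_centro(1)[OF A C, of x] PP[of x] P unfolding a_def b_def by simp
    have "(1 - lam 1) * (1 - lam 2) - (0 - lam 1) * (0 - lam 2) = (1 - (a + b)) * (1 - (a - b)) - (0 - (a + b)) * (0 - (a - b))"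
      using F[of 1] F[of 0] by simp
    then have "lam 1 + lam 2 = 2 * a" by (simp add: algebra_simps)
    then show "lam 1 \<ge> \<bar>lam 2\<bar> \<and> lam 1 + lam 2 \<ge> 0" using a0 o by auto
  next
    assume h: "lam 1 \<ge> \<bar>lam 2\<bar> \<and> lam 1 + lam 2 \<ge> 0"
    define A where "A = M2 ((lam 1 + lam 2)/2) ((lam 1 - lam 2)/2)"
    have "nonneg_mat A" unfolding A_def M2_def nonneg_mat_def using h o by auto
    moreover have "char_poly A = (\<Prod>i = 1..2. [:- lam i, 1:])"
      unfolding poly_eq_poly_eq_iff[symmetric]
    proof
      fix x show "poly (char_poly A) x = poly (\<Prod>i = 1..2. [:- lam i, 1:]) x"
        unfolding A_def cp2_centro(1)[OF M2_carrier M2_centro] PP by (simp add: M2_def field_simps)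
    qed
    ultimately show "\<exists>A \<in> carrier_mat 2 2. nonneg_mat A \<and> centrosymmetric A \<and> char_poly A = (\<Prod>i = 1..2. [:- lam i, 1:])"
      unfolding A_def using M2_carrier M2_centro by blast
  qed
qed

lemma part1: fixes lam :: "nat \<Rightarrow> real"
  shows "(\<exists>A \<in> carrier_mat 1 1. nonneg_mat A \<and> centrosymmetric A \<and>
                 char_poly A = (\<Prod>i = 1..1. [:- lam i, 1:]))
             \<longleftrightarrow> (lam 1 \<ge> \<bar>lam 1\<bar> \<and> (\<Sum>j = 1..1. lam j) \<ge> 0)"
proof
  assume "\<exists>A \<in> carrier_mat 1 1. nonneg_mat A \<and> centrosymmetric A \<and> char_poly A = (\<Prod>i = 1..1. [:- lam i, 1:])"
  then obtain A where A: "A \<in> carrier_mat 1 1" and N: "nonneg_mat A"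
    and P: "char_poly A = (\<Prod>i = 1..1. [:- lam i, 1:])" by blast
  have "poly (char_poly A) 0 = - lam 1" unfolding P by simp
  then have "lam 1 = A$$(0,0)" using cp1[OF A, of 0] by simp
  moreover have "A$$(0,0) \<ge> 0" using N A unfolding nonneg_mat_def by auto
  ultimately show "lam 1 \<ge> \<bar>lam 1\<bar> \<and> (\<Sum>j = 1..1. lam j) \<ge> 0" by simp
next
  assume h: "lam 1 \<ge> \<bar>lam 1\<bar> \<and> (\<Sum>j = 1..1. lam j) \<ge> 0"
  define A where "A = mat 1 1 (\<lambda>_. lam 1)"
  have Ac: "A \<in> carrier_mat 1 1" unfolding A_def by simp
  have "nonneg_mat A" unfolding A_def nonneg_mat_def using h by auto
  moreover have dr: "dim_row A = 1" using Ac by simp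
  have "centrosymmetric A" unfolding centrosymmetric_def dr
  proof (rule eq_matI)
    fix i j assume "i < dim_row A" "j < dim_col A"
    then have "i < 1" "j < 1" using Ac by auto
    then show "(rev_id_mat 1 * A * rev_id_mat 1) $$ (i,j) = A $$ (i,j)" using JAJ[OF Ac] by auto
  qed (use Ac in \<open>auto simp: rev_id_mat_def\<close>)
  moreover have "char_poly A = (\<Prod>i = 1..1. [:- lam i, 1:])"
    unfolding poly_eq_poly_eq_iff[symmetric]
  proof
    fix x show "poly (char_poly A) x = poly (\<Prod>i = 1..1. [:- lam i, 1:]) x"
      unfolding cp1[OF Ac] by (simp add: A_def)
  qed
  ultimately show "\<exists>A \<in> carrier_mat 1 1. nonneg_mat A \<and> centrosymmetric A \<and> char_poly A = (\<Prod>i = 1..1. [:- lam i, 1:])"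
    using Ac by blast
qed

theorem theorem3p1:
  fixes n :: nat
  assumes "1 \<le> n" and "n \<le> 3"
  shows "(\<forall>A \<in> carrier_mat n n. nonneg_mat A \<and> centrosymmetric A \<longrightarrow>
            (\<forall>c. eigenvalue (map_mat complex_of_real A) c \<longrightarrow> c \<in> \<real>))
       \<and> (\<forall>lam :: nat \<Rightarrow> real. (\<forall>i \<in> {1..<n}. lam i \<ge> lam (Suc i)) \<longrightarrow>
            ((\<exists>A \<in> carrier_mat n n. nonneg_mat A \<and> centrosymmetric A \<and>
                 char_poly A = (\<Prod>i = 1..n. [:- lam i, 1:]))
             \<longleftrightarrow> (lam 1 \<ge> \<bar>lam n\<bar> \<and> (\<Sum>j = 1..n. lam j) \<ge> 0)))"
proof (intro conjI allI ballI impI)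
  fix A c assume "A \<in> carrier_mat n n" "nonneg_mat A \<and> centrosymmetric A"
    "eigenvalue (map_mat complex_of_real A) c"
  then show "c \<in> \<real>" using real_part[OF assms] by blast
next
  fix lam :: "nat \<Rightarrow> real" assume h: "\<forall>i \<in> {1..<n}. lam i \<ge> lam (Suc i)"
  have "n = 1 \<or> n = 2 \<or> n = 3" using assms by auto
  then show "(\<exists>A \<in> carrier_mat n n. nonneg_mat A \<and> centrosymmetric A \<and>
                 char_poly A = (\<Prod>i = 1..n. [:- lam i, 1:]))
             \<longleftrightarrow> (lam 1 \<ge> \<bar>lam n\<bar> \<and> (\<Sum>j = 1..n. lam j) \<ge> 0)"
    using part1[of lam] part2[of lam] part3[of lam] h by auto
qed
end
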